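(* $D_{\mathbb{C},2}\ge 1.1066$. More precisely, for $f_2(a,b,c)=\dfrac{(|a|^{4/3}+|b|^{4/3}+|c|^{4/3})^{3/4}}{(|a|+|b|)\sqrt{1+\frac{c^2}{4|ab|}}}$ one has $D_{\mathbb{C},2}\ge f_2\!\left(1,-1,\tfrac{352203}{125000}\right)\approx1.1066$.
   Context: $\ell_\infty^N(\mathbb{C})$ is $\mathbb{C}^N$ with the sup norm, and for a polynomial $P$ on it, $\|P\|=\sup\{|P(z)|:|z_i|\le1\ \forall i\}$. $D_{\mathbb{C},m}$ is the smallest constant $D$ such that for every $N$ and every $m$-homogeneous polynomial $P(z)=\sum_{|\alpha|=m}a_\alpha z^\alpha$ on $\ell_\infty^N(\mathbb{C})$, $\big(\sum_{|\alpha|=m}|a_\alpha|^{\frac{2m}{m+1}}\big)^{\frac{m+1}{2m}}\le D\|P\|$. *)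

theory Defs
  imports "HOL-Analysis.Analysis"
begin

definition multi_idx :: "nat \<Rightarrow> nat \<Rightarrow> (nat \<Rightarrow> nat) set" where
  "multi_idx N m = {\<alpha>. (\<forall>i\<ge>N. \<alpha> i = 0) \<and> (\<Sum>i<N. \<alpha> i) = m}"

definition hpoly :: "nat \<Rightarrow> nat \<Rightarrow> ((nat \<Rightarrow> nat) \<Rightarrow> complex) \<Rightarrow> (nat \<Rightarrow> complex) \<Rightarrow> complex" where
  "hpoly N m a z = (\<Sum>\<alpha>\<in>multi_idx N m. a \<alpha> * (\<Prod>i<N. z i ^ \<alpha> i))"

definition hpoly_norm :: "nat \<Rightarrow> nat \<Rightarrow> ((nat \<Rightarrow> nat) \<Rightarrow> complex) \<Rightarrow> real" where
  "hpoly_norm N m a = Sup {cmod (hpoly N m a z) | z. \<forall>i<N. cmod (z i) \<le> 1}"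

definition coeff_norm :: "nat \<Rightarrow> nat \<Rightarrow> ((nat \<Rightarrow> nat) \<Rightarrow> complex) \<Rightarrow> real" where
  "coeff_norm N m a =
     (\<Sum>\<alpha>\<in>multi_idx N m. cmod (a \<alpha>) powr (2 * real m / (real m + 1))) powr ((real m + 1) / (2 * real m))"

definition BH_admissible :: "nat \<Rightarrow> real \<Rightarrow> bool" where
  "BH_admissible m D \<longleftrightarrow> (\<forall>N a. coeff_norm N m a \<le> D * hpoly_norm N m a)"

text \<open>D_{C,m}: the smallest admissible constant (as an extended real; +\<infinity> if none).\<close>
definition D_C :: "nat \<Rightarrow> ereal" where
  "D_C m = Inf {ereal D | D. BH_admissible m D}"

definition f2 :: "real \<Rightarrow> real \<Rightarrow> real \<Rightarrow> real" where
  "f2 a b c = (\<bar>a\<bar> powr (4/3) + \<bar>b\<bar> powr (4/3) + \<bar>c\<bar> powr (4/3)) powr (3/4)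
      / ((\<bar>a\<bar> + \<bar>b\<bar>) * sqrt (1 + c^2 / (4 * \<bar>a * b\<bar>)))"

end

theory Submission
  imports Defs
begin

definition gk :: "nat \<Rightarrow> nat \<Rightarrow> nat" where
  "gk k = (\<lambda>i. if i = 0 then k else if i = 1 then 2 - k else 0)"

lemma multi_idx_22: "multi_idx 2 2 = gk ` {0,1,2}"
proof
  show "multi_idx 2 2 \<subseteq> gk ` {0,1,2}"
  proof
    fix \<alpha> assume "\<alpha> \<in> multi_idx 2 2"
    hence z: "\<forall>i\<ge>2. \<alpha> i = 0" and s: "\<alpha> 0 + \<alpha> 1 = 2"
      by (auto simp: multi_idx_def numeral_2_eq_2)
    have "\<alpha> = gk (\<alpha> 0)"
    proof
      fix i show "\<alpha> i = gk (\<alpha> 0) i"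
        using z s by (cases "i = 0"; cases "i = 1") (auto simp: gk_def)
    qed
    moreover have "\<alpha> 0 \<in> {0,1,2}" using s by auto
    ultimately show "\<alpha> \<in> gk ` {0,1,2}" by blast
  qed
next
  show "gk ` {0,1,2} \<subseteq> multi_idx 2 2"
    by (auto simp: multi_idx_def gk_def numeral_2_eq_2)
qed

lemma inj_gk: "inj_on gk {0,1,2}"
  by (auto simp: inj_on_def gk_def fun_eq_iff)

lemma sum_gk: "sum f (gk ` {0,1,2}) = f (gk 0) + f (gk 1) + f (gk 2)"
proof -
  have "sum f (gk ` {0,1,2}) = sum (f o gk) {0,1,2}" by (rule sum.reindex[OF inj_gk])
  thus ?thesis by (simp add: add.assoc)
qed

definition acoef :: "real \<Rightarrow> (nat \<Rightarrow> nat) \<Rightarrow> complex" where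
  "acoef c \<alpha> = (if \<alpha> 0 = 2 then 1 else if \<alpha> 0 = 0 then -1 else complex_of_real c)"

lemma hpoly_eq: "hpoly 2 2 (acoef c) z = z 0 ^ 2 - z 1 ^ 2 + complex_of_real c * z 0 * z 1"
  unfolding hpoly_def multi_idx_22 sum_gk
  by (simp add: acoef_def gk_def numeral_2_eq_2 lessThan_Suc power2_eq_square)

lemma coeff_eq: "coeff_norm 2 2 (acoef c) = (2 + \<bar>c\<bar> powr (4/3)) powr (3/4)"
proof -
  have e1: "2 * real 2 / (real 2 + 1) = 4/3" by simp
  have e2: "(real 2 + 1) / (2 * real 2) = 3/4" by simp
  show ?thesis unfolding coeff_norm_def e1 e2 multi_idx_22
    unfolding sum_gk by (simp add: acoef_def gk_def)
qed

lemma key_ineq: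
  fixes u v :: complex
  assumes "cmod u \<le> 1" "cmod v \<le> 1"
  shows "cmod (u^2 - v^2 + complex_of_real c * u * v) \<le> sqrt (4 + c^2)"
proof -
  obtain a b where u: "u = Complex a b" by (cases u)
  obtain d e where v: "v = Complex d e" by (cases v)
  define p where "p = a^2 + b^2"
  define q where "q = d^2 + e^2"
  define x where "x = a*d + b*e"
  have p1: "p \<le> 1" using assms(1) u p_def by (simp add: cmod_def power2_eq_square)
  have q1: "q \<le> 1" using assms(2) v q_def by (simp add: cmod_def power2_eq_square)
  have p0: "p \<ge> 0" "q \<ge> 0" unfolding p_def q_def by auto
  have F: "(cmod (u^2 - v^2 + complex_of_real c * u * v))^2
      = (p+q)^2 + c^2*p*q - 4*x^2 + 2*c*(p-q)*x"
    unfolding u v p_def q_def x_def cmod_power2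
    by (simp add: power2_eq_square algebra_simps)
  have "- 4*x^2 + 2*c*(p-q)*x \<le> c^2*(p-q)^2/4"
  proof -
    have "0 \<le> (2*x - c*(p-q)/2)^2" by simp
    moreover have "(2*x - c*(p-q)/2)^2 = 4*x^2 - 2*c*(p-q)*x + c^2*(p-q)^2/4"
      by (simp add: power2_eq_square algebra_simps)
    ultimately show ?thesis by linarith
  qed
  hence "(cmod (u^2 - v^2 + complex_of_real c * u * v))^2 \<le> (p+q)^2*(1 + c^2/4)"
    using F by (simp add: power2_eq_square algebra_simps)
  also have "\<dots> \<le> 4 * (1 + c^2/4)"
  proof (rule mult_right_mono)
    have "p + q \<le> 2" using p1 q1 by simp
    hence "(p+q)^2 \<le> 2^2" using p0 by (intro power_mono) auto
    thus "(p+q)^2 \<le> 4" by simp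
  qed (simp add: add_nonneg_nonneg)
  also have "\<dots> = 4 + c^2" by simp
  finally show ?thesis by (simp add: real_le_rsqrt)
qed

lemma hnorm_bound:
  "hpoly_norm 2 2 (acoef c) \<le> sqrt (4 + c^2) \<and> 0 \<le> hpoly_norm 2 2 (acoef c)"
proof -
  define S where "S = {cmod (hpoly 2 2 (acoef c) z) | z. \<forall>i<2. cmod (z i) \<le> 1}"
  have bd: "\<And>s. s \<in> S \<Longrightarrow> s \<le> sqrt (4 + c^2)"
    unfolding S_def hpoly_eq by (auto intro!: key_ineq)
  have z: "0 \<in> S" unfolding S_def hpoly_eq
    by (rule CollectI, rule exI[of _ "\<lambda>_. 0"]) simp
  have ne: "S \<noteq> {}" using z by blast
  have "Sup S \<le> sqrt (4 + c^2)" by (rule cSup_least[OF ne bd])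
  moreover have "0 \<le> Sup S" using z bd by (intro cSup_upper2[OF z]) (auto intro: bdd_aboveI[of S "sqrt (4 + c^2)"])
  ultimately show ?thesis unfolding hpoly_norm_def S_def by simp
qed

theorem mainTheorem12:
  shows "D_C 2 \<ge> ereal (f2 1 (-1) (352203 / 125000))"
proof -
  define c :: real where "c = 352203 / 125000"
  define K where "K = (2 + \<bar>c\<bar> powr (4/3)) powr (3/4)"
  define S where "S = sqrt (4 + c^2)"
  have Spos: "S > 0" unfolding S_def by (simp add: add_pos_nonneg)
  have "2 + \<bar>c\<bar> powr (4/3) > 0" by (simp add: add_pos_nonneg)
  hence Kpos: "K > 0" unfolding K_def by simp
  have S2: "S = 2 * sqrt (1 + c^2/4)"
  proof -
    have "4 + c^2 = 2^2 * (1 + c^2/4)" by simp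
    hence "sqrt (4 + c^2) = sqrt (2^2) * sqrt (1 + c^2/4)" by (metis real_sqrt_mult)
    thus ?thesis unfolding S_def by simp
  qed
  have f2eq: "f2 1 (-1) c = K / S"
    unfolding f2_def K_def S2 by simp
  show ?thesis unfolding D_C_def c_def[symmetric] f2eq
  proof (rule Inf_greatest, clarify)
    fix D assume adm: "BH_admissible 2 D"
    have le: "K \<le> D * hpoly_norm 2 2 (acoef c)"
      using adm unfolding BH_admissible_def by (metis coeff_eq K_def)
    have hb: "hpoly_norm 2 2 (acoef c) \<le> S" "0 \<le> hpoly_norm 2 2 (acoef c)"
      using hnorm_bound S_def by auto
    have "D \<ge> 0"
    proof (rule ccontr)
      assume "\<not> D \<ge> 0"
      hence "D * hpoly_norm 2 2 (acoef c) \<le> 0" using hb by (simp add: mult_nonpos_nonneg)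
      thus False using le Kpos by simp
    qed
    hence "D * hpoly_norm 2 2 (acoef c) \<le> D * S" using hb by (simp add: mult_left_mono)
    hence "K \<le> D * S" using le by simp
    hence "K / S \<le> D" using Spos by (simp add: divide_le_eq)
    thus "ereal (K / S) \<le> ereal D" by simp
  qed
qed

end
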